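(* Assume the Standing Setting and let $\theta\in\mathbb{R}^{\mathfrak d}$. Then $\mathcal G(\theta)\in\partial\mathcal L(\theta)$, where $\partial\mathcal L(\theta)$ is the limiting subdifferential of $\mathcal L$ at $\theta$.
   Context: Standing Setting: Let $d,H,\mathfrak d\in\mathbb{N}$ with $\mathfrak d=dH+2H+1$, let $a\in\mathbb{R}$, $b\in(a,\infty)$, $f\in C([a,b]^d,\mathbb{R})$, and let $p\colon[a,b]^d\to[0,\infty)$ be bounded and measurable. Let $\lambda$ be Lebesgue measure on $\mathbb{R}^d$ and $\|\cdot\|$ the Euclidean norm. For $\theta=(\theta_1,\dots,\theta_{\mathfrak d})\in\mathbb{R}^{\mathfrak d}$, $i\in\{1,\dots,H\}$, $j\in\{1,\dots,d\}$ write $w^\theta_{i,j}=\theta_{(i-1)d+j}$, $b^\theta_i=\theta_{Hd+i}$, $v^\theta_i=\theta_{H(d+1)+i}$, $c^\theta=\theta_{\mathfrak d}$. Define $\mathcal N^\theta(x)=c^\theta+\sum_{i=1}^H v^\theta_i\max\{b^\theta_i+\sum_{j=1}^d w^\theta_{i,j}x_j,0\}$ for $x\in\mathbb{R}^d$ and the risk $\mathcal L(\theta)=\int_{[a,b]^d}(f(y)-\mathcal N^\theta(y))^2p(y)\,\lambda(\mathrm{d}y)$. Let $\mathfrak R_r\in C^1(\mathbb{R},\mathbb{R})$, $r\in\mathbb{N}$, satisfy for all $x\in\mathbb{R}$ that $\lim_{r\to\infty}\big(|\mathfrak R_r(x)-\max\{x,0\}|+|(\mathfrak R_r)'(x)-\mathbb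 1_{(0,\infty)}(x)|\big)=0$ and $\sup_{r\in\mathbb{N}}\sup_{y\in[-|x|,|x|]}|(\mathfrak R_r)'(y)|<\infty$, and let $\mathfrak L_r(\theta)=\int_{[a,b]^d}\big(f(y)-c^\theta-\sum_{i=1}^H v^\theta_i\,\mathfrak R_r(b^\theta_i+\sum_{j=1}^d w^\theta_{i,j}y_j)\big)^2p(y)\,\lambda(\mathrm{d}y)$. Let $\mathcal G=(\mathcal G_1,\dots,\mathcal G_{\mathfrak d})\colon\mathbb{R}^{\mathfrak d}\to\mathbb{R}^{\mathfrak d}$ satisfy $\mathcal G(\theta)=\lim_{r\to\infty}(\nabla\mathfrak L_r)(\theta)$ for every $\theta$ at which this limit exists. For $\theta\in\mathbb{R}^{\mathfrak d}$, $i\in\{1,\dots,H\}$ let $I_i^\theta=\{x\in[a,b]^d\colon b^\theta_i+\sum_{j=1}^d w^\theta_{i,j}x_j>0\}$ and let $\mathbf D^\theta=\{i\in\{1,\dots,H\}\colon |b^\theta_i|+\sum_{j=1}^d|w^\theta_{i,j}|=0\}$ (the set of degenerate hidden neurons). For $\varepsilon>0$, $B_\varepsilon(\theta)=\{\vartheta\in\mathbb{R}^{\mathfrak d}\colon\|\theta-\vartheta\|<\varepsilon\}$. Subdifferentials: for $n\in\mathbb{N}$, $g\in C(\mathbb{R}^n,\mathbb{R})$, $x\in\mathbb{R}^n$, the (Fréchet) subdifferential is $\hat\partial g(x)=\{y\in\mathbb{R}^n\colon \liminf_{\mathbb{R}^n\setminus\{0\}\ni h\to0}\frac{g(x+h)-g(x)-\langle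 y,h\rangle}{\|h\|}\ge0\}$, and the limiting subdifferential is $\partial g(x)=\bigcap_{\varepsilon\in(0,\infty)}\overline{\bigcup_{z\in\mathbb{R}^n,\|x-z\|<\varepsilon}\hat\partial g(z)}$ (equivalently, the set of $y$ for which there are $z_k\to x$, $y_k\to y$ with $y_k\in\hat\partial g(z_k)$). *)

theory Defs
  imports "HOL-Analysis.Analysis"
begin

text \<open>Parameter space R^dd with dd = d*H + 2*H + 1, realised (isometrically) as the
  Euclidean space of tuples (W, b, v, c): W the H x d matrix of inner weights,
  b the inner biases, v the outer weights, c the outer bias. Hidden neurons are
  indexed by the finite type 'h (H = CARD('h)), input coordinates by 'd (d = CARD('d)).\<close>

type_synonym ('d, 'h) params = "(real^'d^'h) \<times> (real^'h) \<times> (real^'h) \<times> real"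

definition wgt :: "('d::finite, 'h::finite) params \<Rightarrow> 'h \<Rightarrow> 'd \<Rightarrow> real" where
  "wgt \<theta> i j = (fst \<theta>) $ i $ j"

definition bias :: "('d::finite, 'h::finite) params \<Rightarrow> 'h \<Rightarrow> real" where
  "bias \<theta> i = (fst (snd \<theta>)) $ i"

definition outw :: "('d::finite, 'h::finite) params \<Rightarrow> 'h \<Rightarrow> real" where
  "outw \<theta> i = (fst (snd (snd \<theta>))) $ i"

definition cst :: "('d::finite, 'h::finite) params \<Rightarrow> real" where
  "cst \<theta> = snd (snd (snd \<theta>))"

definition cube :: "real \<Rightarrow> real \<Rightarrow> (real^'d::finite) set" where
  "cube a b = cbox (\<chi> j. a) (\<chi> j. b)"

definition realization :: "('d::finite, 'h::finite) params \<Rightarrow> real^'d \<Rightarrow> real" where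
  "realization \<theta> x = cst \<theta> + (\<Sum>i\<in>UNIV. outw \<theta> i * max (bias \<theta> i + (\<Sum>j\<in>UNIV. wgt \<theta> i j * x $ j)) 0)"

definition risk :: "real \<Rightarrow> real \<Rightarrow> (real^'d::finite \<Rightarrow> real) \<Rightarrow> (real^'d \<Rightarrow> real)
    \<Rightarrow> ('d, 'h::finite) params \<Rightarrow> real" where
  "risk a b f p \<theta> = integral\<^sup>L (lebesgue_on (cube a b))
      (\<lambda>y. (f y - realization \<theta> y)\<^sup>2 * p y)"

definition approx_risk :: "(real \<Rightarrow> real) \<Rightarrow> real \<Rightarrow> real \<Rightarrow> (real^'d::finite \<Rightarrow> real)
    \<Rightarrow> (real^'d \<Rightarrow> real) \<Rightarrow> ('d, 'h::finite) params \<Rightarrow> real" where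
  "approx_risk Rr a b f p \<theta> = integral\<^sup>L (lebesgue_on (cube a b))
      (\<lambda>y. (f y - cst \<theta> - (\<Sum>i\<in>UNIV. outw \<theta> i * Rr (bias \<theta> i + (\<Sum>j\<in>UNIV. wgt \<theta> i j * y $ j))))\<^sup>2 * p y)"

definition frechet_subdiff :: "('a::euclidean_space \<Rightarrow> real) \<Rightarrow> 'a \<Rightarrow> 'a set" where
  "frechet_subdiff g x = {y. Liminf (at 0) (\<lambda>h. ereal ((g (x + h) - g x - inner y h) / norm h)) \<ge> 0}"

definition limiting_subdiff :: "('a::euclidean_space \<Rightarrow> real) \<Rightarrow> 'a \<Rightarrow> 'a set" where
  "limiting_subdiff g x = (\<Inter>\<epsilon>\<in>{0<..}. closure (\<Union>z\<in>{z. dist x z < \<epsilon>}. frechet_subdiff g z))"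

end

theory Submission
  imports Defs
begin

definition Zv :: "real^'d::finite \<Rightarrow> 'h::finite \<Rightarrow> ('d,'h) params" where
  "Zv y i = (axis i y, axis i 1, 0, 0)"
definition Ov :: "'h::finite \<Rightarrow> ('d::finite,'h) params" where
  "Ov i = (0, 0, axis i 1, 0)"
definition Cv :: "('d::finite,'h::finite) params" where
  "Cv = (0,0,0,1)"

lemma inner_Zv: "inner \<theta> (Zv y i) = bias \<theta> i + (\<Sum>j\<in>UNIV. wgt \<theta> i j * y $ j)"
  by (cases \<theta>) (auto simp: Zv_def axis_def inner_vec_def bias_def wgt_def if_distrib cong: if_cong)

lemma inner_Ov: "inner \<theta> (Ov i) = outw \<theta> i"
  by (cases \<theta>) (auto simp: Ov_def axis_def inner_vec_def outw_def if_distrib cong: if_cong)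

lemma inner_Cv: "inner \<theta> Cv = cst \<theta>"
  by (cases \<theta>) (auto simp: Cv_def cst_def)

lemma norm_axis_gen: "norm (axis i (y::'a::real_normed_vector) :: 'a^'n::finite) = norm y"
proof -
  have "norm (axis i y :: 'a^'n) = sqrt (\<Sum>j\<in>UNIV. (norm (axis i y $ j))\<^sup>2)"
    by (simp add: norm_vec_def L2_set_def)
  also have "(\<Sum>j\<in>UNIV. (norm (axis i y $ j :: 'a))\<^sup>2) = (norm y)\<^sup>2"
  proof -
    have "(\<Sum>j\<in>UNIV. (norm (axis i y $ j :: 'a))\<^sup>2) = (\<Sum>j\<in>UNIV. if j = i then (norm y)\<^sup>2 else 0)"
      by (rule sum.cong) (auto simp: axis_def)
    then show ?thesis by simp
  qed
  finally show ?thesis by simp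
qed

lemma norm_Ov: "norm (Ov i :: ('d::finite,'h::finite) params) = 1"
  by (simp add: Ov_def norm_Pair norm_axis_gen)

lemma norm_Zv: "norm (Zv y i :: ('d::finite,'h::finite) params) \<le> norm y + 1"
proof -
  have "norm (Zv y i :: ('d::finite,'h::finite) params) = sqrt ((norm y)\<^sup>2 + 1)"
    by (simp add: Zv_def norm_Pair norm_axis_gen)
  also have "\<dots> \<le> norm y + 1"
    by (rule real_le_lsqrt) (auto simp: power2_eq_square algebra_simps)
  finally show ?thesis .
qed
lemma norm_Cv: "norm (Cv :: ('d::finite,'h::finite) params) = 1"
  by (simp add: Cv_def norm_Pair)


definition net :: "(real \<Rightarrow> real) \<Rightarrow> ('d::finite,'h::finite) params \<Rightarrow> real^'d \<Rightarrow> real" where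
  "net \<sigma> \<theta> y = inner \<theta> Cv + (\<Sum>i\<in>UNIV. inner \<theta> (Ov i) * \<sigma> (inner \<theta> (Zv y i)))"

definition ngrad :: "(real \<Rightarrow> real) \<Rightarrow> (real \<Rightarrow> real) \<Rightarrow> ('d::finite,'h::finite) params \<Rightarrow> real^'d \<Rightarrow> ('d,'h) params" where
  "ngrad \<sigma> \<sigma>' \<theta> y = Cv + (\<Sum>i\<in>UNIV. \<sigma> (inner \<theta> (Zv y i)) *\<^sub>R Ov i
       + (inner \<theta> (Ov i) * \<sigma>' (inner \<theta> (Zv y i))) *\<^sub>R Zv y i)"

lemma net_deriv:
  assumes "\<And>i. (\<sigma> has_real_derivative \<sigma>' (inner \<theta> (Zv y i))) (at (inner \<theta> (Zv y i)))"
  shows "((\<lambda>\<theta>. net \<sigma> \<theta> y) has_derivative (\<lambda>h. inner h (ngrad \<sigma> \<sigma>' \<theta> y))) (at \<theta>)"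
proof -
  have d1: "((\<lambda>\<theta>. \<sigma> (inner \<theta> (Zv y i))) has_derivative (\<lambda>h. \<sigma>' (inner \<theta> (Zv y i)) * inner h (Zv y i))) (at \<theta>)" for i
  proof -
    have "((\<lambda>\<theta>. inner \<theta> (Zv y i)) has_derivative (\<lambda>h. inner h (Zv y i))) (at \<theta>)"
      by (rule bounded_linear_imp_has_derivative) (rule bounded_linear_inner_left)
    from has_derivative_compose[OF this assms[of i, unfolded has_field_derivative_def]]
    show ?thesis by (simp add: mult.commute)
  qed
  have "((\<lambda>\<theta>. net \<sigma> \<theta> y) has_derivative (\<lambda>h. inner h Cv + (\<Sum>i\<in>UNIV. inner h (Ov i) * \<sigma> (inner \<theta> (Zv y i))
      + inner \<theta> (Ov i) * (\<sigma>' (inner \<theta> (Zv y i)) * inner h (Zv y i))))) (at \<theta>)"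
    unfolding net_def
  proof (intro has_derivative_add has_derivative_sum bounded_linear_imp_has_derivative bounded_linear_inner_left)
    fix i
    show "((\<lambda>x. x \<bullet> Ov i * \<sigma> (x \<bullet> Zv y i)) has_derivative
          (\<lambda>x. x \<bullet> Ov i * \<sigma> (\<theta> \<bullet> Zv y i) + \<theta> \<bullet> Ov i * (\<sigma>' (\<theta> \<bullet> Zv y i) * (x \<bullet> Zv y i)))) (at \<theta>)"
      by (rule has_derivative_eq_rhs, rule has_derivative_mult[OF bounded_linear_imp_has_derivative[OF bounded_linear_inner_left] d1])
         (auto simp: algebra_simps)
  qed
  then show ?thesis
    by (rule has_derivative_eq_rhs)
       (auto simp: ngrad_def inner_add_right inner_sum_right algebra_simps)
qed


lemma deriv_frechet:
  fixes g :: "'a::euclidean_space \<Rightarrow> real"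
  assumes "(g has_derivative (\<lambda>h. inner h v)) (at x)"
  shows "v \<in> frechet_subdiff g x"
proof -
  from assms have "((\<lambda>h. norm (g (x + h) - g x - inner h v) / norm h) \<longlongrightarrow> 0) (at 0)"
    unfolding has_derivative_at by simp
  then have "((\<lambda>h. norm ((g (x + h) - g x - inner v h) / norm h)) \<longlongrightarrow> 0) (at 0)"
    by (simp add: inner_commute)
  then have "((\<lambda>h. (g (x + h) - g x - inner v h) / norm h) \<longlongrightarrow> 0) (at 0)"
    by (rule tendsto_norm_zero_cancel)
  then have "((\<lambda>h. ereal ((g (x + h) - g x - inner v h) / norm h)) \<longlongrightarrow> ereal 0) (at 0)"
    by (rule tendsto_ereal)
  then have "Liminf (at 0) (\<lambda>h. ereal ((g (x + h) - g x - inner v h) / norm h)) = ereal 0"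
    by (intro lim_imp_Liminf) auto
  then show ?thesis unfolding frechet_subdiff_def by simp
qed

lemma limiting_I:
  assumes "\<And>e. e > 0 \<Longrightarrow> \<exists>z. dist x z < e \<and> v \<in> frechet_subdiff g z"
  shows "v \<in> limiting_subdiff g x"
  unfolding limiting_subdiff_def
proof
  fix e :: real assume "e \<in> {0<..}"
  then obtain z where "dist x z < e" "v \<in> frechet_subdiff g z" using assms by auto
  then show "v \<in> closure (\<Union>z\<in>{z. dist x z < e}. frechet_subdiff g z)"
    using closure_subset by fastforce
qed

lemma deriv_under_integral:
  fixes q :: "'p::euclidean_space \<Rightarrow> 'a \<Rightarrow> real" and g :: "'a \<Rightarrow> 'p"
  assumes fm: "finite_measure M" and \<delta>: "\<delta> > 0"
   and meas: "\<And>\<theta>. \<theta> \<in> ball \<theta>0 \<delta> \<Longrightarrow> q \<theta> \<in> borel_measurable M"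
   and int0: "integrable M (q \<theta>0)"
   and gm: "g \<in> borel_measurable M" and gb: "\<And>y. y \<in> space M \<Longrightarrow> norm (g y) \<le> B"
   and lip: "\<And>\<theta> y. \<theta> \<in> ball \<theta>0 \<delta> \<Longrightarrow> y \<in> space M \<Longrightarrow> \<bar>q \<theta> y - q \<theta>0 y\<bar> \<le> K * norm (\<theta> - \<theta>0)"
   and der: "AE y in M. ((\<lambda>\<theta>. q \<theta> y) has_derivative (\<lambda>h. inner h (g y))) (at \<theta>0)"
  shows "((\<lambda>\<theta>. integral\<^sup>L M (q \<theta>)) has_derivative (\<lambda>h. inner h (integral\<^sup>L M g))) (at \<theta>0)"
proof -
  interpret finite_measure M by (rule fm)
  have intq: "integrable M (q \<theta>)" if "\<theta> \<in> ball \<theta>0 \<delta>" for \<theta>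
  proof -
    have "integrable M (\<lambda>y. q \<theta> y - q \<theta>0 y)"
      by (rule integrable_const_bound[where B="K * norm (\<theta> - \<theta>0)"])
         (use lip[OF that] meas[OF that] int0 in auto)
    then have "integrable M (\<lambda>y. (q \<theta> y - q \<theta>0 y) + q \<theta>0 y)"
      using int0 by (intro Bochner_Integration.integrable_add) auto
    then show ?thesis by simp
  qed
  have intg: "integrable M g"
    by (rule integrable_const_bound[where B=B]) (use gb gm in auto)
  show ?thesis
    unfolding has_derivative_at
  proof
    show "bounded_linear (\<lambda>h. inner h (integral\<^sup>L M g))" by (rule bounded_linear_inner_left)
    have "((\<lambda>h. norm (integral\<^sup>L M (q (\<theta>0 + h)) - integral\<^sup>L M (q \<theta>0) - inner h (integral\<^sup>L M g)) / norm h) \<longlongrightarrow> 0)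
       (at 0 within ball 0 \<delta>)"
      unfolding tendsto_at_iff_sequentially
    proof (intro allI impI)
      fix X :: "nat \<Rightarrow> 'p"
      assume X: "\<forall>i. X i \<in> ball 0 \<delta> - {0}" and X0: "X \<longlonglongrightarrow> 0"
      define e where "e n y = (q (\<theta>0 + X n) y - q \<theta>0 y - inner (X n) (g y)) / norm (X n)" for n y
      have Xb: "\<theta>0 + X n \<in> ball \<theta>0 \<delta>" for n using X by (auto simp: dist_norm)
      have Xn: "norm (X n) > 0" for n using X by auto
      have em: "e n \<in> borel_measurable M" for n
        unfolding e_def using meas[OF Xb] int0 gm by measurable
      have lim: "(\<lambda>n. integral\<^sup>L M (e n)) \<longlonglongrightarrow> integral\<^sup>L M (\<lambda>_. 0::real)"
      proof (rule integral_dominated_convergence[where w="\<lambda>_. K + B"])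
        show "(\<lambda>_. 0::real) \<in> borel_measurable M" by simp
        show "e n \<in> borel_measurable M" for n by (rule em)
        show "integrable M (\<lambda>_. K + B)" by simp
        show "AE y in M. (\<lambda>n. e n y) \<longlonglongrightarrow> 0"
          using der
        proof eventually_elim
          case (elim y)
          then have "((\<lambda>h. norm (q (\<theta>0 + h) y - q \<theta>0 y - inner h (g y)) / norm h) \<longlongrightarrow> 0) (at 0 within UNIV)"
            unfolding has_derivative_at by simp
          then have "((\<lambda>h. norm (q (\<theta>0 + h) y - q \<theta>0 y - inner h (g y)) / norm h) \<circ> X) \<longlonglongrightarrow> 0"
            unfolding tendsto_at_iff_sequentially using X X0 by auto
          then have "(\<lambda>n. norm (e n y)) \<longlonglongrightarrow> 0"
            by (simp add: e_def o_def)
          then show ?case by (rule tendsto_norm_zero_cancel)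
        qed
        show "AE y in M. norm (e n y) \<le> K + B" for n
        proof (rule AE_I2)
          fix y assume y: "y \<in> space M"
          have "\<bar>q (\<theta>0 + X n) y - q \<theta>0 y - inner (X n) (g y)\<bar> \<le> K * norm (X n) + norm (X n) * B"
            using lip[OF Xb[of n] y] Cauchy_Schwarz_ineq2[of "X n" "g y"] gb[OF y]
              mult_left_mono[OF gb[OF y] norm_ge_zero, of "X n"]
            by auto
          then show "norm (e n y) \<le> K + B"
            using Xn by (simp add: e_def divide_le_eq algebra_simps)
        qed
      qed
      have ie: "integral\<^sup>L M (e n) = (integral\<^sup>L M (q (\<theta>0 + X n)) - integral\<^sup>L M (q \<theta>0) - inner (X n) (integral\<^sup>L M g)) / norm (X n)" for n
        unfolding e_def
        using intq[OF Xb] int0 intg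
        by (simp add: integral_diff integrable_inner_right)
      have "(\<lambda>n. \<bar>integral\<^sup>L M (e n)\<bar>) \<longlonglongrightarrow> 0"
        using tendsto_rabs_zero[OF lim[simplified]] by simp
      then show "((\<lambda>h. norm (integral\<^sup>L M (q (\<theta>0 + h)) - integral\<^sup>L M (q \<theta>0) - inner h (integral\<^sup>L M g)) / norm h) \<circ> X) \<longlonglongrightarrow> 0"
        by (simp add: ie o_def)
    qed
    moreover have eq: "at (0::'p) within ball 0 \<delta> = at 0"
      by (rule at_within_open) (auto simp: \<delta>)
    ultimately show "((\<lambda>h. norm (integral\<^sup>L M (q (\<theta>0 + h)) - integral\<^sup>L M (q \<theta>0) - inner h (integral\<^sup>L M g)) / norm h) \<longlongrightarrow> 0) (at 0)"
      by (simp only: eq)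
  qed
qed

lemma inner_Zv_bound:
  assumes "norm \<theta> \<le> T" "norm y \<le> Y"
  shows "\<bar>inner \<theta> (Zv y i)\<bar> \<le> T * (Y + 1)"
proof -
  have "\<bar>inner \<theta> (Zv y i)\<bar> \<le> norm \<theta> * norm (Zv y i)" by (rule Cauchy_Schwarz_ineq2)
  also have "\<dots> \<le> T * (Y + 1)"
    using assms norm_Zv[of y i] by (intro mult_mono) (auto intro: order_trans[OF norm_ge_zero])
  finally show ?thesis .
qed

lemma inner_Ov_bound: "\<bar>inner \<theta> (Ov i)\<bar> \<le> norm \<theta>"
  using Cauchy_Schwarz_ineq2[of \<theta> "Ov i"] by (simp add: norm_Ov)

lemma inner_Cv_bound: "\<bar>inner \<theta> Cv\<bar> \<le> norm \<theta>"
  using Cauchy_Schwarz_ineq2[of \<theta> Cv] by (simp add: norm_Cv)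

lemma net_bound:
  fixes \<theta> :: "('d::finite,'h::finite) params"
  assumes "norm \<theta> \<le> T" "norm y \<le> Y"
    and S: "\<And>x. \<bar>x\<bar> \<le> T * (Y + 1) \<Longrightarrow> \<bar>\<sigma> x\<bar> \<le> S"
  shows "\<bar>net \<sigma> \<theta> y\<bar> \<le> T + real CARD('h) * (T * S)"
proof -
  have "\<bar>net \<sigma> \<theta> y\<bar> \<le> \<bar>inner \<theta> Cv\<bar> + (\<Sum>i\<in>UNIV. \<bar>inner \<theta> (Ov i) * \<sigma> (inner \<theta> (Zv y i))\<bar>)"
    unfolding net_def by (rule order_trans[OF abs_triangle_ineq add_left_mono[OF sum_abs]])
  also have "\<dots> \<le> T + (\<Sum>i\<in>(UNIV::'h set). T * S)"
  proof (intro add_mono sum_mono)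
    show "\<bar>inner \<theta> Cv\<bar> \<le> T" using inner_Cv_bound[of \<theta>] assms by linarith
    fix i
    show "\<bar>inner \<theta> (Ov i) * \<sigma> (inner \<theta> (Zv y i))\<bar> \<le> T * S"
      unfolding abs_mult
      using inner_Ov_bound[of \<theta> i] assms S[OF inner_Zv_bound[OF assms(1,2)]]
      by (intro mult_mono) auto
  qed
  finally show ?thesis by simp
qed

lemma net_lip:
  fixes \<theta> \<theta>0 :: "('d::finite,'h::finite) params"
  assumes "norm \<theta> \<le> T" "norm \<theta>0 \<le> T" "norm y \<le> Y" "0 \<le> L"
    and S: "\<And>x. \<bar>x\<bar> \<le> T * (Y + 1) \<Longrightarrow> \<bar>\<sigma> x\<bar> \<le> S"
    and L: "\<And>x x'. \<bar>x\<bar> \<le> T * (Y + 1) \<Longrightarrow> \<bar>x'\<bar> \<le> T * (Y + 1) \<Longrightarrow> \<bar>\<sigma> x - \<sigma> x'\<bar> \<le> L * \<bar>x - x'\<bar>"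
  shows "\<bar>net \<sigma> \<theta> y - net \<sigma> \<theta>0 y\<bar> \<le> (1 + real CARD('h) * (S + T * L * (Y + 1))) * norm (\<theta> - \<theta>0)"
proof -
  have T0: "T \<ge> 0" using assms(1) norm_ge_zero order_trans by blast
  have Y0: "Y \<ge> 0" using assms(3) norm_ge_zero order_trans by blast
  define d where "d = norm (\<theta> - \<theta>0)"
  have eq: "net \<sigma> \<theta> y - net \<sigma> \<theta>0 y = inner (\<theta> - \<theta>0) Cv +
     (\<Sum>i\<in>UNIV. inner (\<theta> - \<theta>0) (Ov i) * \<sigma> (inner \<theta> (Zv y i))
        + inner \<theta>0 (Ov i) * (\<sigma> (inner \<theta> (Zv y i)) - \<sigma> (inner \<theta>0 (Zv y i))))"
  proof -
    have "net \<sigma> \<theta> y - net \<sigma> \<theta>0 y = (inner \<theta> Cv - inner \<theta>0 Cv) + (\<Sum>i\<in>UNIV. inner \<theta> (Ov i) * \<sigma> (inner \<theta> (Zv y i)) - inner \<theta>0 (Ov i) * \<sigma> (inner \<theta>0 (Zv y i)))"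
      unfolding net_def by (simp add: sum_subtractf)
    also have "\<dots> = inner (\<theta> - \<theta>0) Cv +
     (\<Sum>i\<in>UNIV. inner (\<theta> - \<theta>0) (Ov i) * \<sigma> (inner \<theta> (Zv y i))
        + inner \<theta>0 (Ov i) * (\<sigma> (inner \<theta> (Zv y i)) - \<sigma> (inner \<theta>0 (Zv y i))))"
      by (intro arg_cong2[where f="(+)"] sum.cong) (auto simp: inner_diff_left right_diff_distrib left_diff_distrib)
    finally show ?thesis .
  qed
  have "\<bar>net \<sigma> \<theta> y - net \<sigma> \<theta>0 y\<bar> \<le> \<bar>inner (\<theta> - \<theta>0) Cv\<bar> + (\<Sum>i\<in>UNIV. \<bar>inner (\<theta> - \<theta>0) (Ov i) * \<sigma> (inner \<theta> (Zv y i))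
        + inner \<theta>0 (Ov i) * (\<sigma> (inner \<theta> (Zv y i)) - \<sigma> (inner \<theta>0 (Zv y i)))\<bar>)"
    unfolding eq by (rule order_trans[OF abs_triangle_ineq add_left_mono[OF sum_abs]])
  also have "\<dots> \<le> d + (\<Sum>i\<in>(UNIV::'h set). d * S + T * (L * (d * (Y + 1))))"
  proof (intro add_mono sum_mono)
    show "\<bar>inner (\<theta> - \<theta>0) Cv\<bar> \<le> d" using inner_Cv_bound[of "\<theta> - \<theta>0"] by (simp add: d_def)
    fix i
    have zb: "\<bar>inner \<theta> (Zv y i)\<bar> \<le> T * (Y + 1)" "\<bar>inner \<theta>0 (Zv y i)\<bar> \<le> T * (Y + 1)"
      using inner_Zv_bound assms by blast+
    have a1: "\<bar>inner (\<theta> - \<theta>0) (Ov i) * \<sigma> (inner \<theta> (Zv y i))\<bar> \<le> d * S"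
      unfolding abs_mult using inner_Ov_bound[of "\<theta> - \<theta>0" i] S[OF zb(1)]
      by (intro mult_mono) (auto simp: d_def)
    have zd: "\<bar>inner \<theta> (Zv y i) - inner \<theta>0 (Zv y i)\<bar> \<le> d * (Y + 1)"
      using inner_Zv_bound[of "\<theta> - \<theta>0" d y Y i] assms by (simp add: d_def inner_diff_left)
    have a2: "\<bar>inner \<theta>0 (Ov i) * (\<sigma> (inner \<theta> (Zv y i)) - \<sigma> (inner \<theta>0 (Zv y i)))\<bar> \<le> T * (L * (d * (Y + 1)))"
      unfolding abs_mult using inner_Ov_bound[of \<theta>0 i] assms(2) L[OF zb]
        mult_left_mono[OF zd \<open>0 \<le> L\<close>] T0
      by (intro mult_mono) auto
    show "\<bar>inner (\<theta> - \<theta>0) (Ov i) * \<sigma> (inner \<theta> (Zv y i))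
        + inner \<theta>0 (Ov i) * (\<sigma> (inner \<theta> (Zv y i)) - \<sigma> (inner \<theta>0 (Zv y i)))\<bar> \<le> d * S + T * (L * (d * (Y + 1)))"
      using a1 a2 by linarith
  qed
  also have "\<dots> = (1 + real CARD('h) * (S + T * L * (Y + 1))) * d"
    by (simp add: algebra_simps)
  finally show ?thesis by (simp add: d_def)
qed

lemma ngrad_bound:
  fixes \<theta> :: "('d::finite,'h::finite) params"
  assumes "norm \<theta> \<le> T" "norm y \<le> Y"
    and S: "\<And>x. \<bar>x\<bar> \<le> T * (Y + 1) \<Longrightarrow> \<bar>\<sigma> x\<bar> \<le> S"
    and S': "\<And>x. \<bar>x\<bar> \<le> T * (Y + 1) \<Longrightarrow> \<bar>\<sigma>' x\<bar> \<le> S'"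
  shows "norm (ngrad \<sigma> \<sigma>' \<theta> y) \<le> 1 + real CARD('h) * (S + T * S' * (Y + 1))"
proof -
  have T0: "T \<ge> 0" using assms(1) norm_ge_zero order_trans by blast
  have "norm (ngrad \<sigma> \<sigma>' \<theta> y) \<le> norm (Cv::('d,'h) params) + (\<Sum>i\<in>UNIV. norm (\<sigma> (inner \<theta> (Zv y i)) *\<^sub>R Ov i
       + (inner \<theta> (Ov i) * \<sigma>' (inner \<theta> (Zv y i))) *\<^sub>R Zv y i))"
    unfolding ngrad_def by (rule order_trans[OF norm_triangle_ineq add_left_mono[OF norm_sum]])
  also have "\<dots> \<le> 1 + (\<Sum>i\<in>(UNIV::'h set). S + T * S' * (Y + 1))"
  proof (intro add_mono sum_mono)
    show "norm (Cv::('d,'h) params) \<le> 1" by (simp add: norm_Cv)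
    fix i
    have zb: "\<bar>inner \<theta> (Zv y i)\<bar> \<le> T * (Y + 1)"
      using inner_Zv_bound assms by blast
    have a1: "norm (\<sigma> (inner \<theta> (Zv y i)) *\<^sub>R (Ov i :: ('d,'h) params)) \<le> S"
      using S[OF zb] by (simp add: norm_Ov)
    have a2: "norm ((inner \<theta> (Ov i) * \<sigma>' (inner \<theta> (Zv y i))) *\<^sub>R Zv y i) \<le> T * S' * (Y + 1)"
      unfolding norm_scaleR abs_mult
      using inner_Ov_bound[of \<theta> i] assms(1) S'[OF zb] norm_Zv[of y i] assms(2) T0
      by (intro mult_mono) auto
    show "norm (\<sigma> (inner \<theta> (Zv y i)) *\<^sub>R Ov i
       + (inner \<theta> (Ov i) * \<sigma>' (inner \<theta> (Zv y i))) *\<^sub>R Zv y i) \<le> S + T * S' * (Y + 1)"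
      by (rule order_trans[OF norm_triangle_ineq add_mono[OF a1 a2]])
  qed
  finally show ?thesis by simp
qed

definition qf :: "(real^'d \<Rightarrow> real) \<Rightarrow> (real^'d \<Rightarrow> real) \<Rightarrow> (real \<Rightarrow> real) \<Rightarrow> ('d::finite,'h::finite) params \<Rightarrow> real^'d \<Rightarrow> real" where
  "qf f p \<sigma> \<theta> y = (f y - net \<sigma> \<theta> y)\<^sup>2 * p y"

definition qg :: "(real^'d \<Rightarrow> real) \<Rightarrow> (real^'d \<Rightarrow> real) \<Rightarrow> (real \<Rightarrow> real) \<Rightarrow> (real \<Rightarrow> real) \<Rightarrow> ('d::finite,'h::finite) params \<Rightarrow> real^'d \<Rightarrow> ('d,'h) params" where
  "qg f p \<sigma> \<sigma>' \<theta> y = (- (2 * (f y - net \<sigma> \<theta> y) * p y)) *\<^sub>R ngrad \<sigma> \<sigma>' \<theta> y"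

lemma qf_deriv:
  assumes "\<And>i. (\<sigma> has_real_derivative \<sigma>' (inner \<theta> (Zv y i))) (at (inner \<theta> (Zv y i)))"
  shows "((\<lambda>\<theta>. qf f p \<sigma> \<theta> y) has_derivative (\<lambda>h. inner h (qg f p \<sigma> \<sigma>' \<theta> y))) (at \<theta>)"
proof -
  note nd = net_deriv[OF assms]
  have d1: "((\<lambda>\<theta>. f y - net \<sigma> \<theta> y) has_derivative (\<lambda>h. - inner h (ngrad \<sigma> \<sigma>' \<theta> y))) (at \<theta>)"
    using has_derivative_diff[OF has_derivative_const nd] by simp
  have "((\<lambda>\<theta>. (f y - net \<sigma> \<theta> y) * (f y - net \<sigma> \<theta> y) * p y) has_derivative
     (\<lambda>h. ((f y - net \<sigma> \<theta> y) * (- inner h (ngrad \<sigma> \<sigma>' \<theta> y)) + (- inner h (ngrad \<sigma> \<sigma>' \<theta> y)) * (f y - net \<sigma> \<theta> y)) * p y)) (at \<theta>)"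
    by (intro has_derivative_mult_left has_derivative_mult[OF d1 d1, THEN has_derivative_eq_rhs]) auto
  then show ?thesis
    unfolding qf_def qg_def power2_eq_square
    by (rule has_derivative_eq_rhs) (auto simp: algebra_simps)
qed

lemma Zv_cont: "continuous_on UNIV (\<lambda>y. Zv y i)"
  unfolding Zv_def axis_def
proof (intro continuous_on_Pair continuous_on_const continuous_on_vec_lambda)
  fix j show "continuous_on UNIV (\<lambda>y::real^'d. if j = i then y else 0)"
    by (cases "j = i") (auto intro: continuous_intros)
qed

lemma Zv_meas[measurable]: "S \<in> sets lebesgue \<Longrightarrow> (\<lambda>y. Zv y i) \<in> borel_measurable (lebesgue_on S)"
  by (intro continuous_imp_measurable_on_sets_lebesgue continuous_on_subset[OF Zv_cont]) auto

lemma z_meas[measurable]: "S \<in> sets lebesgue \<Longrightarrow> (\<lambda>y. inner \<theta> (Zv y i)) \<in> borel_measurable (lebesgue_on S)"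
  by (intro continuous_imp_measurable_on_sets_lebesgue continuous_on_subset[OF continuous_on_inner[OF continuous_on_const Zv_cont]]) auto

lemma net_meas[measurable]:
  assumes "\<sigma> \<in> borel_measurable borel" "S \<in> sets lebesgue"
  shows "(\<lambda>y. net \<sigma> \<theta> y) \<in> borel_measurable (lebesgue_on S)"
  unfolding net_def using assms by measurable

lemma ngrad_meas[measurable]:
  assumes "\<sigma> \<in> borel_measurable borel" "\<sigma>' \<in> borel_measurable borel" "S \<in> sets lebesgue"
  shows "(\<lambda>y. ngrad \<sigma> \<sigma>' \<theta> y) \<in> borel_measurable (lebesgue_on S)"
  unfolding ngrad_def using assms by measurable

lemma qf_meas:
  assumes "\<sigma> \<in> borel_measurable borel" "S \<in> sets lebesgue"
   "f \<in> borel_measurable (lebesgue_on S)" "p \<in> borel_measurable (lebesgue_on S)"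
  shows "qf f p \<sigma> \<theta> \<in> borel_measurable (lebesgue_on S)"
  unfolding qf_def using assms by measurable

lemma qg_meas:
  assumes "\<sigma> \<in> borel_measurable borel" "\<sigma>' \<in> borel_measurable borel" "S \<in> sets lebesgue"
   "f \<in> borel_measurable (lebesgue_on S)" "p \<in> borel_measurable (lebesgue_on S)"
  shows "qg f p \<sigma> \<sigma>' \<theta> \<in> borel_measurable (lebesgue_on S)"
  unfolding qg_def using assms by measurable

lemma qf_lip:
  fixes \<theta> \<theta>0 :: "('d::finite,'h::finite) params"
  assumes "norm \<theta> \<le> T" "norm \<theta>0 \<le> T" "norm y \<le> Y" "0 \<le> L"
    and F: "\<bar>f y\<bar> \<le> F" and P: "0 \<le> p y" "p y \<le> P"
    and S: "\<And>x. \<bar>x\<bar> \<le> T * (Y + 1) \<Longrightarrow> \<bar>\<sigma> x\<bar> \<le> S"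
    and L: "\<And>x x'. \<bar>x\<bar> \<le> T * (Y + 1) \<Longrightarrow> \<bar>x'\<bar> \<le> T * (Y + 1) \<Longrightarrow> \<bar>\<sigma> x - \<sigma> x'\<bar> \<le> L * \<bar>x - x'\<bar>"
  shows "\<bar>qf f p \<sigma> \<theta> y - qf f p \<sigma> \<theta>0 y\<bar> \<le>
     ((1 + real CARD('h) * (S + T * L * (Y + 1))) * (2 * F + 2 * (T + real CARD('h) * (T * S))) * P) * norm (\<theta> - \<theta>0)"
proof -
  define N where "N = T + real CARD('h) * (T * S)"
  define Ln where "Ln = 1 + real CARD('h) * (S + T * L * (Y + 1))"
  have n1: "\<bar>net \<sigma> \<theta> y\<bar> \<le> N" "\<bar>net \<sigma> \<theta>0 y\<bar> \<le> N"
    using net_bound[of \<theta> T y Y \<sigma> S] net_bound[of \<theta>0 T y Y \<sigma> S] assms by (auto simp: N_def)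
  have nl: "\<bar>net \<sigma> \<theta> y - net \<sigma> \<theta>0 y\<bar> \<le> Ln * norm (\<theta> - \<theta>0)"
    using net_lip[of \<theta> T \<theta>0 y Y L \<sigma> S] assms by (auto simp: Ln_def)
  have eq: "qf f p \<sigma> \<theta> y - qf f p \<sigma> \<theta>0 y = (net \<sigma> \<theta>0 y - net \<sigma> \<theta> y) * (2 * f y - net \<sigma> \<theta> y - net \<sigma> \<theta>0 y) * p y"
    unfolding qf_def by (simp add: power2_eq_square algebra_simps)
  have "\<bar>qf f p \<sigma> \<theta> y - qf f p \<sigma> \<theta>0 y\<bar> = \<bar>net \<sigma> \<theta> y - net \<sigma> \<theta>0 y\<bar> * \<bar>2 * f y - net \<sigma> \<theta> y - net \<sigma> \<theta>0 y\<bar> * p y"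
    unfolding eq abs_mult using P by (simp add: abs_minus_commute)
  also have "\<dots> \<le> (Ln * norm (\<theta> - \<theta>0)) * (2 * F + 2 * N) * P"
    using nl n1 F P by (intro mult_mono) auto
  finally show ?thesis by (simp add: N_def Ln_def algebra_simps)
qed

lemma qg_bound:
  fixes \<theta> :: "('d::finite,'h::finite) params"
  assumes "norm \<theta> \<le> T" "norm y \<le> Y"
    and F: "\<bar>f y\<bar> \<le> F" and P: "0 \<le> p y" "p y \<le> P"
    and S: "\<And>x. \<bar>x\<bar> \<le> T * (Y + 1) \<Longrightarrow> \<bar>\<sigma> x\<bar> \<le> S"
    and S': "\<And>x. \<bar>x\<bar> \<le> T * (Y + 1) \<Longrightarrow> \<bar>\<sigma>' x\<bar> \<le> S'"
  shows "norm (qg f p \<sigma> \<sigma>' \<theta> y) \<le> 2 * (F + (T + real CARD('h) * (T * S))) * P * (1 + real CARD('h) * (S + T * S' * (Y + 1)))"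
proof -
  have n1: "\<bar>net \<sigma> \<theta> y\<bar> \<le> T + real CARD('h) * (T * S)"
    using net_bound[of \<theta> T y Y \<sigma> S] assms by auto
  have g: "norm (ngrad \<sigma> \<sigma>' \<theta> y) \<le> 1 + real CARD('h) * (S + T * S' * (Y + 1))"
    using ngrad_bound[of \<theta> T y Y \<sigma> S \<sigma>' S'] assms by auto
  have "norm (qg f p \<sigma> \<sigma>' \<theta> y) = (2 * \<bar>f y - net \<sigma> \<theta> y\<bar> * p y) * norm (ngrad \<sigma> \<sigma>' \<theta> y)"
  proof -
    have "\<bar>- (2 * (f y - net \<sigma> \<theta> y) * p y)\<bar> = 2 * \<bar>f y - net \<sigma> \<theta> y\<bar> * p y"
      using P by (simp only: abs_minus_cancel abs_mult)
    then show ?thesis unfolding qg_def norm_scaleR by simp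
  qed
  also have "\<dots> \<le> (2 * (F + (T + real CARD('h) * (T * S))) * P) * (1 + real CARD('h) * (S + T * S' * (Y + 1)))"
    using n1 F P g by (intro mult_mono) (auto simp: abs_triangle_ineq4 intro: order_trans[OF abs_triangle_ineq4])
  finally show ?thesis .
qed

lemma integral_qf_deriv:
  fixes \<theta>0 :: "('d::finite,'h::finite) params"
  assumes Sm: "S \<in> lmeasurable"
    and Y: "\<And>y. y \<in> S \<Longrightarrow> norm y \<le> Y"
    and F: "\<And>y. y \<in> S \<Longrightarrow> \<bar>f y\<bar> \<le> F"
    and P: "\<And>y. y \<in> S \<Longrightarrow> 0 \<le> p y \<and> p y \<le> P"
    and fm: "f \<in> borel_measurable (lebesgue_on S)" and pm: "p \<in> borel_measurable (lebesgue_on S)"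
    and \<sigma>m: "\<sigma> \<in> borel_measurable borel" and \<sigma>'m: "\<sigma>' \<in> borel_measurable borel"
    and \<sigma>b: "\<And>M. \<exists>Sb L. 0 \<le> L \<and> (\<forall>x. \<bar>x\<bar> \<le> M \<longrightarrow> \<bar>\<sigma> x\<bar> \<le> Sb) \<and>
                   (\<forall>x x'. \<bar>x\<bar> \<le> M \<longrightarrow> \<bar>x'\<bar> \<le> M \<longrightarrow> \<bar>\<sigma> x - \<sigma> x'\<bar> \<le> L * \<bar>x - x'\<bar>)"
    and \<sigma>'b: "\<And>M. \<exists>Sb'. \<forall>x. \<bar>x\<bar> \<le> M \<longrightarrow> \<bar>\<sigma>' x\<bar> \<le> Sb'"
    and der: "AE y in lebesgue_on S. \<forall>i. (\<sigma> has_real_derivative \<sigma>' (inner \<theta>0 (Zv y i))) (at (inner \<theta>0 (Zv y i)))"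
  shows "((\<lambda>\<theta>. integral\<^sup>L (lebesgue_on S) (qf f p \<sigma> \<theta>)) has_derivative
           (\<lambda>h. inner h (integral\<^sup>L (lebesgue_on S) (qg f p \<sigma> \<sigma>' \<theta>0)))) (at \<theta>0)"
proof -
  have Sl: "S \<in> sets lebesgue" using Sm by (simp add: fmeasurableD)
  define T where "T = norm \<theta>0 + 1"
  obtain Sb L where L0: "0 \<le> L" and Sb: "\<And>x. \<bar>x\<bar> \<le> T * (Y + 1) \<Longrightarrow> \<bar>\<sigma> x\<bar> \<le> Sb"
    and Lb: "\<And>x x'. \<bar>x\<bar> \<le> T * (Y + 1) \<Longrightarrow> \<bar>x'\<bar> \<le> T * (Y + 1) \<Longrightarrow> \<bar>\<sigma> x - \<sigma> x'\<bar> \<le> L * \<bar>x - x'\<bar>"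
    using \<sigma>b[of "T * (Y + 1)"] by blast
  obtain Sb' where Sb': "\<And>x. \<bar>x\<bar> \<le> T * (Y + 1) \<Longrightarrow> \<bar>\<sigma>' x\<bar> \<le> Sb'"
    using \<sigma>'b[of "T * (Y + 1)"] by blast
  have nT: "norm \<theta> \<le> T" if "\<theta> \<in> ball \<theta>0 1" for \<theta>
    using that norm_triangle_ineq2[of \<theta> \<theta>0] by (auto simp: T_def dist_norm norm_minus_commute)
  have nT0: "norm \<theta>0 \<le> T" by (simp add: T_def)
  show ?thesis
  proof (rule deriv_under_integral[where \<delta>=1])
    show "finite_measure (lebesgue_on S)" using Sm by (rule finite_measure_lebesgue_on)
    show "(0::real) < 1" by simp
    show "qf f p \<sigma> \<theta> \<in> borel_measurable (lebesgue_on S)" for \<theta>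
      using qf_meas[OF \<sigma>m Sl fm pm] .
    show "qg f p \<sigma> \<sigma>' \<theta>0 \<in> borel_measurable (lebesgue_on S)"
      using qg_meas[OF \<sigma>m \<sigma>'m Sl fm pm] .
    show "norm (qg f p \<sigma> \<sigma>' \<theta>0 y) \<le> 2 * (F + (T + real CARD('h) * (T * Sb))) * P * (1 + real CARD('h) * (Sb + T * Sb' * (Y + 1)))"
      if "y \<in> space (lebesgue_on S)" for y
      using that qg_bound[where \<theta>=\<theta>0 and T=T and y=y and Y=Y and f=f and F=F and p=p and P=P and \<sigma>=\<sigma> and S=Sb and \<sigma>'=\<sigma>' and S'=Sb'] 
        nT0 Y[of y] F[of y] P[of y] Sb Sb' by auto
    show "\<bar>qf f p \<sigma> \<theta> y - qf f p \<sigma> \<theta>0 y\<bar> \<le>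
     ((1 + real CARD('h) * (Sb + T * L * (Y + 1))) * (2 * F + 2 * (T + real CARD('h) * (T * Sb))) * P) * norm (\<theta> - \<theta>0)"
      if "\<theta> \<in> ball \<theta>0 1" "y \<in> space (lebesgue_on S)" for \<theta> y
      using that qf_lip[where \<theta>=\<theta> and \<theta>0=\<theta>0 and T=T and y=y and Y=Y and L=L and f=f and F=F and p=p and P=P and \<sigma>=\<sigma> and S=Sb]
        nT[OF that(1)] nT0 Y[of y] L0 F[of y] P[of y] Sb Lb by auto
    show "AE y in lebesgue_on S. ((\<lambda>\<theta>. qf f p \<sigma> \<theta> y) has_derivative (\<lambda>h. inner h (qg f p \<sigma> \<sigma>' \<theta>0 y))) (at \<theta>0)"
      using der by eventually_elim (rule qf_deriv, auto)
    show "integrable (lebesgue_on S) (qf f p \<sigma> \<theta>0)"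
    proof -
      interpret finite_measure "lebesgue_on S" using Sm by (rule finite_measure_lebesgue_on)
      show ?thesis
      proof (rule integrable_const_bound[where B="(F + (T + real CARD('h) * (T * Sb)))\<^sup>2 * P"])
        show "qf f p \<sigma> \<theta>0 \<in> borel_measurable (lebesgue_on S)"
          using qf_meas[OF \<sigma>m Sl fm pm] .
        show "AE y in lebesgue_on S. norm (qf f p \<sigma> \<theta>0 y) \<le> (F + (T + real CARD('h) * (T * Sb)))\<^sup>2 * P"
        proof (rule AE_I2)
          fix y assume "y \<in> space (lebesgue_on S)"
          then have y: "y \<in> S" by simp
          have n1: "\<bar>net \<sigma> \<theta>0 y\<bar> \<le> T + real CARD('h) * (T * Sb)"
            using net_bound[OF nT0 Y[OF y], of \<sigma> Sb] Sb by auto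
          have "\<bar>f y - net \<sigma> \<theta>0 y\<bar> \<le> F + (T + real CARD('h) * (T * Sb))"
            using n1 F[OF y] by linarith
          then have "(f y - net \<sigma> \<theta>0 y)\<^sup>2 \<le> (F + (T + real CARD('h) * (T * Sb)))\<^sup>2"
            by (metis abs_ge_zero power2_abs power_mono)
          then show "norm (qf f p \<sigma> \<theta>0 y) \<le> (F + (T + real CARD('h) * (T * Sb)))\<^sup>2 * P"
            using P[OF y] unfolding qf_def by (simp add: abs_mult mult_mono)
        qed
      qed
    qed
  qed
qed

lemma relu_m: "(\<lambda>x::real. max x 0) \<in> borel_measurable borel" by measurable
lemma ind_m: "(\<lambda>x::real. if x > 0 then 1 else (0::real)) \<in> borel_measurable borel" by measurable

lemma relu_b: "\<exists>Sb L. 0 \<le> L \<and> (\<forall>x. \<bar>x\<bar> \<le> M \<longrightarrow> \<bar>max x (0::real)\<bar> \<le> Sb) \<and>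
                   (\<forall>x x'. \<bar>x\<bar> \<le> M \<longrightarrow> \<bar>x'\<bar> \<le> M \<longrightarrow> \<bar>max x 0 - max x' 0\<bar> \<le> L * \<bar>x - x'\<bar>)"
  by (rule exI[of _ M], rule exI[of _ 1]) auto

lemma ind_b: "\<exists>Sb'. \<forall>x::real. \<bar>x\<bar> \<le> M \<longrightarrow> \<bar>if x > 0 then 1 else (0::real)\<bar> \<le> Sb'"
  by (rule exI[of _ 1]) auto

lemma relu_deriv:
  assumes "x \<noteq> (0::real)"
  shows "((\<lambda>x. max x 0) has_real_derivative (if x > 0 then 1 else 0)) (at x)"
proof (cases "x > 0")
  case True
  show ?thesis
    by (rule has_field_derivative_transform_within_open[of "\<lambda>x. x" _ x "{0<..}"])
       (use True in \<open>auto intro!: derivative_eq_intros\<close>)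
next
  case False
  then have "x < 0" using assms by auto
  show ?thesis
    by (rule has_field_derivative_transform_within_open[of "\<lambda>x. 0" _ x "{..<0}"])
       (use False \<open>x < 0\<close> in \<open>auto intro!: derivative_eq_intros\<close>)
qed

lemma R_facts:
  fixes R R' :: "nat \<Rightarrow> real \<Rightarrow> real"
  assumes R_deriv: "\<forall>r\<ge>1. \<forall>x. (R r has_real_derivative R' r x) (at x)"
    and R_lim: "\<forall>x. (\<lambda>r. \<bar>R r x - max x 0\<bar> + \<bar>R' r x - (if x > 0 then 1 else 0)\<bar>) \<longlonglongrightarrow> 0"
    and R'_bdd: "\<forall>x. \<exists>C. \<forall>r\<ge>1. \<forall>y\<in>{-\<bar>x\<bar>..\<bar>x\<bar>}. \<bar>R' r y\<bar> \<le> C"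
  shows R_lim1: "\<And>x. (\<lambda>r. R r x) \<longlonglongrightarrow> max x 0"
    and R_lim2: "\<And>x. (\<lambda>r. R' r x) \<longlonglongrightarrow> (if x > 0 then 1 else 0)"
    and R_unif: "\<And>M. \<exists>Sb L. 0 \<le> L \<and> (\<forall>r\<ge>1. \<forall>x. \<bar>x\<bar> \<le> M \<longrightarrow> \<bar>R r x\<bar> \<le> Sb) \<and>
                   (\<forall>r\<ge>1. \<forall>x x'. \<bar>x\<bar> \<le> M \<longrightarrow> \<bar>x'\<bar> \<le> M \<longrightarrow> \<bar>R r x - R r x'\<bar> \<le> L * \<bar>x - x'\<bar>) \<and>
                   (\<forall>r\<ge>1. \<forall>x. \<bar>x\<bar> \<le> M \<longrightarrow> \<bar>R' r x\<bar> \<le> L)"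
proof -
  fix x
  have a: "(\<lambda>r. \<bar>R r x - max x 0\<bar>) \<longlonglongrightarrow> 0"
    by (rule tendsto_sandwich[OF _ _ tendsto_const R_lim[rule_format, of x]]) auto
  have b: "(\<lambda>r. \<bar>R' r x - (if x > 0 then 1 else 0)\<bar>) \<longlonglongrightarrow> 0"
    by (rule tendsto_sandwich[OF _ _ tendsto_const R_lim[rule_format, of x]]) auto
  show "(\<lambda>r. R r x) \<longlonglongrightarrow> max x 0"
    using a by (simp add: LIM_zero_iff tendsto_rabs_zero_iff)
  show "(\<lambda>r. R' r x) \<longlonglongrightarrow> (if x > 0 then 1 else 0)"
    using b by (simp add: LIM_zero_iff tendsto_rabs_zero_iff)
next
  fix M :: real
  obtain C where C: "\<And>r y. r \<ge> 1 \<Longrightarrow> y \<in> {-\<bar>M\<bar>..\<bar>M\<bar>} \<Longrightarrow> \<bar>R' r y\<bar> \<le> C"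
    using R'_bdd by blast
  define L where "L = max C 0"
  have C': "\<bar>R' r y\<bar> \<le> L" if "r \<ge> 1" "\<bar>y\<bar> \<le> M" for r y
  proof -
    have "y \<in> {-\<bar>M\<bar>..\<bar>M\<bar>}" using that by auto
    then show ?thesis using C[of r y] that by (auto simp: L_def)
  qed
  have lip: "\<bar>R r x - R r x'\<bar> \<le> L * \<bar>x - x'\<bar>" if r: "r \<ge> 1" and "\<bar>x\<bar> \<le> M" "\<bar>x'\<bar> \<le> M" for r x x'
  proof -
    have *: "\<bar>R r u - R r v\<bar> \<le> L * \<bar>u - v\<bar>" if "v < u" "\<bar>u\<bar> \<le> M" "\<bar>v\<bar> \<le> M" for u v
    proof -
      obtain z where z: "v < z" "z < u" "R r u - R r v = (u - v) * R' r z"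
        using MVT2[OF \<open>v < u\<close>, of "R r" "R' r"] R_deriv r by blast
      have "\<bar>z\<bar> \<le> M" using z that by auto
      then have "\<bar>R' r z\<bar> \<le> L" using C' r by auto
      then show ?thesis using z(3) that(1) by (simp add: abs_mult mult.commute mult_left_mono)
    qed
    show ?thesis
      using *[of x' x] *[of x x'] that by (cases "x = x'"; cases "x < x'") (auto simp: abs_minus_commute)
  qed
  have "(\<lambda>r. \<bar>R r 0 - max 0 0\<bar>) \<longlonglongrightarrow> 0"
    by (rule tendsto_sandwich[OF _ _ tendsto_const R_lim[rule_format, of 0]]) auto
  then have "(\<lambda>r. R r 0) \<longlonglongrightarrow> 0"
    by (simp add: LIM_zero_iff tendsto_rabs_zero_iff)
  then have "convergent (\<lambda>r. R r 0)"
    by (auto simp: convergent_def)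
  then obtain B0 where B0: "\<And>r. \<bar>R r 0\<bar> \<le> B0"
    by (metis Bseq_def convergent_imp_Bseq real_norm_def)
  have "\<bar>R r x\<bar> \<le> B0 + L * \<bar>M\<bar>" if "r \<ge> 1" "\<bar>x\<bar> \<le> M" for r x
  proof -
    have "0 \<le> M" using that(2) by linarith
    then have "\<bar>R r x - R r 0\<bar> \<le> L * \<bar>x - 0\<bar>" using lip[OF that(1) that(2), of 0] by auto
    moreover have "L * \<bar>x\<bar> \<le> L * \<bar>M\<bar>" using that by (intro mult_left_mono) (auto simp: L_def)
    ultimately show ?thesis using B0[of r] by simp
  qed
  then show "\<exists>Sb L. 0 \<le> L \<and> (\<forall>r\<ge>1. \<forall>x. \<bar>x\<bar> \<le> M \<longrightarrow> \<bar>R r x\<bar> \<le> Sb) \<and>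
                   (\<forall>r\<ge>1. \<forall>x x'. \<bar>x\<bar> \<le> M \<longrightarrow> \<bar>x'\<bar> \<le> M \<longrightarrow> \<bar>R r x - R r x'\<bar> \<le> L * \<bar>x - x'\<bar>) \<and>
                   (\<forall>r\<ge>1. \<forall>x. \<bar>x\<bar> \<le> M \<longrightarrow> \<bar>R' r x\<bar> \<le> L)"
    using lip C' by (intro exI[of _ "B0 + L * \<bar>M\<bar>"] exI[of _ L]) (auto simp: L_def)
qed

theorem proposition2p12:
  fixes a b :: real
    and f :: "real^'d::finite \<Rightarrow> real"
    and p :: "real^'d \<Rightarrow> real"
    and R R' :: "nat \<Rightarrow> real \<Rightarrow> real"
    and G :: "('d, 'h::finite) params \<Rightarrow> ('d, 'h) params"
    and \<theta> :: "('d, 'h) params"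
  assumes ab: "a < b"
    and f_cont: "continuous_on (cube a b) f"
    and p_meas: "p \<in> borel_measurable (lebesgue_on (cube a b))"
    and p_nonneg: "\<forall>y\<in>cube a b. 0 \<le> p y"
    and p_bdd: "bounded (p ` cube a b)"
    and R_deriv: "\<forall>r\<ge>1. \<forall>x. (R r has_real_derivative R' r x) (at x)"
    and R'_cont: "\<forall>r\<ge>1. continuous_on UNIV (R' r)"
    and R_lim: "\<forall>x. (\<lambda>r. \<bar>R r x - max x 0\<bar> + \<bar>R' r x - (if x > 0 then 1 else 0)\<bar>) \<longlonglongrightarrow> 0"
    and R'_bdd: "\<forall>x. \<exists>C. \<forall>r\<ge>1. \<forall>y\<in>{-\<bar>x\<bar>..\<bar>x\<bar>}. \<bar>R' r y\<bar> \<le> C"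
    and G_def: "\<forall>\<phi> v. (\<exists>D. (\<forall>r\<ge>1. GDERIV (approx_risk (R r) a b f p) \<phi> :> D r) \<and> D \<longlonglongrightarrow> v)
                  \<longrightarrow> G \<phi> = v"
  shows "G \<theta> \<in> limiting_subdiff (risk a b f p) \<theta>"
proof -
  define S :: "(real^'d) set" where "S = cube a b"
  have Sm: "S \<in> lmeasurable" unfolding S_def cube_def by simp
  have Sl: "S \<in> sets lebesgue" using Sm by (simp add: fmeasurableD)
  have fin: "finite_measure (lebesgue_on S)" using Sm by (rule finite_measure_lebesgue_on)
  obtain Y where Y: "\<And>y. y \<in> S \<Longrightarrow> norm y \<le> Y"
    using bounded_cbox unfolding S_def cube_def bounded_iff by blast
  have "bounded (f ` S)"
    unfolding S_def cube_def
    by (rule compact_imp_bounded, rule compact_continuous_image) (use f_cont in \<open>auto simp: cube_def\<close>)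
  then obtain F where F: "\<And>y. y \<in> S \<Longrightarrow> \<bar>f y\<bar> \<le> F"
    unfolding bounded_iff by auto
  obtain P where P0: "\<And>y. y \<in> S \<Longrightarrow> \<bar>p y\<bar> \<le> P"
    using p_bdd unfolding bounded_iff S_def by auto
  have P: "\<And>y. y \<in> S \<Longrightarrow> 0 \<le> p y \<and> p y \<le> P"
    using P0 p_nonneg unfolding S_def by fastforce
  have fm: "f \<in> borel_measurable (lebesgue_on S)"
    using continuous_imp_measurable_on_sets_lebesgue[OF f_cont] Sl by (simp add: S_def)
  have pm: "p \<in> borel_measurable (lebesgue_on S)" using p_meas by (simp add: S_def)
  define relu :: "real \<Rightarrow> real" where "relu = (\<lambda>x. max x 0)"
  define ind :: "real \<Rightarrow> real" where "ind = (\<lambda>x. if x > 0 then 1 else 0)"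
  have risk_eq: "risk a b f p = (\<lambda>\<theta>. integral\<^sup>L (lebesgue_on S) (qf f p relu \<theta>))"
    unfolding risk_def S_def
    by (intro ext Bochner_Integration.integral_cong) (auto simp: qf_def net_def realization_def inner_Zv inner_Ov inner_Cv relu_def)
  have approx_eq: "approx_risk (R r) a b f p = (\<lambda>\<theta>. integral\<^sup>L (lebesgue_on S) (qf f p (R r) \<theta>))" for r
    unfolding approx_risk_def S_def
    by (intro ext Bochner_Integration.integral_cong) (auto simp: qf_def net_def inner_Zv inner_Ov inner_Cv diff_diff_eq)
  define V where "V = integral\<^sup>L (lebesgue_on S) (qg f p relu ind \<theta>)"
  note Rf = R_facts[OF R_deriv R_lim R'_bdd]
  have Rm: "R r \<in> borel_measurable borel" if "r \<ge> 1" for r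
  proof -
    have "continuous_on UNIV (R r)"
      using R_deriv that by (meson DERIV_isCont continuous_at_imp_continuous_on)
    then show ?thesis by (rule borel_measurable_continuous_onI)
  qed
  have R'm: "R' r \<in> borel_measurable borel" if "r \<ge> 1" for r
    using R'_cont that by (simp add: borel_measurable_continuous_onI)
  have relum: "relu \<in> borel_measurable borel" unfolding relu_def by (rule relu_m)
  have indm: "ind \<in> borel_measurable borel" unfolding ind_def by (rule ind_m)
  have G\<theta>: "G \<theta> = V"
  proof -
    define T where "T = norm \<theta>"
    obtain Sb L where L0: "0 \<le> L"
      and Sb: "\<And>r x. r \<ge> 1 \<Longrightarrow> \<bar>x\<bar> \<le> T * (Y + 1) \<Longrightarrow> \<bar>R r x\<bar> \<le> Sb"
      and Lb: "\<And>r x x'. r \<ge> 1 \<Longrightarrow> \<bar>x\<bar> \<le> T * (Y + 1) \<Longrightarrow> \<bar>x'\<bar> \<le> T * (Y + 1) \<Longrightarrow> \<bar>R r x - R r x'\<bar> \<le> L * \<bar>x - x'\<bar>"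
      and Lb': "\<And>r x. r \<ge> 1 \<Longrightarrow> \<bar>x\<bar> \<le> T * (Y + 1) \<Longrightarrow> \<bar>R' r x\<bar> \<le> L"
      using Rf(3)[of "T * (Y + 1)"] by blast
    define D where "D r = integral\<^sup>L (lebesgue_on S) (qg f p (R (max r 1)) (R' (max r 1)) \<theta>)" for r
    have "GDERIV (approx_risk (R r) a b f p) \<theta> :> D r" if r: "r \<ge> 1" for r
    proof -
      have "max r 1 = r" using r by simp
      have "((\<lambda>\<theta>. integral\<^sup>L (lebesgue_on S) (qf f p (R r) \<theta>)) has_derivative
           (\<lambda>h. inner h (integral\<^sup>L (lebesgue_on S) (qg f p (R r) (R' r) \<theta>)))) (at \<theta>)"
      proof (rule integral_qf_deriv[OF Sm Y F P fm pm Rm[OF r] R'm[OF r]])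
        fix M
        obtain Sb L where "0 \<le> L" "\<forall>r\<ge>1. \<forall>x. \<bar>x\<bar> \<le> M \<longrightarrow> \<bar>R r x\<bar> \<le> Sb"
           "\<forall>r\<ge>1. \<forall>x x'. \<bar>x\<bar> \<le> M \<longrightarrow> \<bar>x'\<bar> \<le> M \<longrightarrow> \<bar>R r x - R r x'\<bar> \<le> L * \<bar>x - x'\<bar>"
           "\<forall>r\<ge>1. \<forall>x. \<bar>x\<bar> \<le> M \<longrightarrow> \<bar>R' r x\<bar> \<le> L"
          using Rf(3)[of M] by blast
        then show "\<exists>Sb L. 0 \<le> L \<and> (\<forall>x. \<bar>x\<bar> \<le> M \<longrightarrow> \<bar>R r x\<bar> \<le> Sb) \<and>
                   (\<forall>x x'. \<bar>x\<bar> \<le> M \<longrightarrow> \<bar>x'\<bar> \<le> M \<longrightarrow> \<bar>R r x - R r x'\<bar> \<le> L * \<bar>x - x'\<bar>)"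
          and "\<exists>Sb'. \<forall>x. \<bar>x\<bar> \<le> M \<longrightarrow> \<bar>R' r x\<bar> \<le> Sb'"
          using r by blast+
      next
        show "AE y in lebesgue_on S. \<forall>i. (R r has_real_derivative R' r (inner \<theta> (Zv y i))) (at (inner \<theta> (Zv y i)))"
          using R_deriv r by auto
      qed
      then show ?thesis
        unfolding gderiv_def approx_eq D_def \<open>max r 1 = r\<close> .
    qed
    moreover have "D \<longlonglongrightarrow> V"
    proof -
      interpret finite_measure "lebesgue_on S" by (rule fin)
      define W where "W = 2 * (F + (T + real CARD('h) * (T * Sb))) * P * (1 + real CARD('h) * (Sb + T * L * (Y + 1)))"
      show ?thesis
        unfolding D_def V_def
      proof (rule integral_dominated_convergence[where w="\<lambda>_. W"])
        show "qg f p relu ind \<theta> \<in> borel_measurable (lebesgue_on S)"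
          by (rule qg_meas[OF relum indm Sl fm pm])
        show "qg f p (R (max r 1)) (R' (max r 1)) \<theta> \<in> borel_measurable (lebesgue_on S)" for r
          by (rule qg_meas[OF Rm R'm Sl fm pm]) auto
        show "integrable (lebesgue_on S) (\<lambda>_. W)" by simp
        have l1: "(\<lambda>r. R (max r 1) x) \<longlonglongrightarrow> relu x" for x
        proof -
          have "eventually (\<lambda>r. R r x = R (max r 1) x) sequentially"
            by (rule eventually_sequentiallyI[of 1]) auto
          then show ?thesis using Rf(1)[of x] unfolding relu_def by (rule Lim_transform_eventually[rotated])
        qed
        have l2: "(\<lambda>r. R' (max r 1) x) \<longlonglongrightarrow> ind x" for x
        proof -
          have "eventually (\<lambda>r. R' r x = R' (max r 1) x) sequentially"
            by (rule eventually_sequentiallyI[of 1]) auto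
          then show ?thesis using Rf(2)[of x] unfolding ind_def by (rule Lim_transform_eventually[rotated])
        qed
        show "AE y in lebesgue_on S. (\<lambda>r. qg f p (R (max r 1)) (R' (max r 1)) \<theta> y) \<longlonglongrightarrow> qg f p relu ind \<theta> y"
          unfolding qg_def ngrad_def net_def
          by (intro AE_I2 tendsto_intros l1 l2)
        show "AE y in lebesgue_on S. norm (qg f p (R (max r 1)) (R' (max r 1)) \<theta> y) \<le> W" for r
        proof (rule AE_I2)
          fix y assume "y \<in> space (lebesgue_on S)"
          then have y: "y \<in> S" by simp
          show "norm (qg f p (R (max r 1)) (R' (max r 1)) \<theta> y) \<le> W"
            unfolding W_def
            using qg_bound[where \<theta>=\<theta> and T=T and y=y and Y=Y and f=f and F=F and p=p and P=P and \<sigma>="R (max r 1)" and S=Sb and \<sigma>'="R' (max r 1)" and S'=L]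
              Y[OF y] F[OF y] P[OF y] Sb[of "max r 1"] Lb'[of "max r 1"] by (auto simp: T_def)
        qed
      qed
    qed
    ultimately show ?thesis using G_def by blast
  qed
  define Dg where "Dg = {i. bias \<theta> i = 0 \<and> (\<forall>j. wgt \<theta> i j = 0)}"
  have V_frechet: "V \<in> frechet_subdiff (risk a b f p) \<theta>e"
    if e0: "\<epsilon> > 0" and \<theta>e_def: "\<theta>e = (fst \<theta>, (\<chi> i. if i \<in> Dg then -\<epsilon> else bias \<theta> i), snd (snd \<theta>))" for \<epsilon> \<theta>e
  proof -
    have zeq: "inner \<theta>e (Zv y i) = (if i \<in> Dg then -\<epsilon> else inner \<theta> (Zv y i))" for y i
      by (auto simp: inner_Zv \<theta>e_def bias_def wgt_def Dg_def)
    have z0: "inner \<theta> (Zv y i) = 0" if "i \<in> Dg" for y i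
      using that by (auto simp: inner_Zv Dg_def)
    have oeq: "inner \<theta>e (Ov i) = inner \<theta> (Ov i)" for i
      by (simp add: inner_Ov \<theta>e_def outw_def)
    have ceq: "inner \<theta>e Cv = inner \<theta> Cv"
      by (simp add: inner_Cv \<theta>e_def cst_def)
    have req: "relu (inner \<theta>e (Zv y i)) = relu (inner \<theta> (Zv y i))" for y i
      using zeq[of y i] z0[of i y] e0 by (auto simp: relu_def)
    have ieq: "ind (inner \<theta>e (Zv y i)) = ind (inner \<theta> (Zv y i))" for y i
      using zeq[of y i] z0[of i y] e0 by (auto simp: ind_def)
    have qgeq: "qg f p relu ind \<theta>e y = qg f p relu ind \<theta> y" for y
      unfolding qg_def ngrad_def net_def by (simp only: req ieq oeq ceq)
    have hyp: "AE y in lebesgue_on S. \<forall>i. inner \<theta>e (Zv y i) \<noteq> 0"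
    proof -
      have "AE y in lebesgue_on S. \<forall>i\<in>UNIV. inner \<theta>e (Zv y i) \<noteq> 0"
      proof (rule AE_finite_allI)
        fix i :: 'h
        have zi: "inner \<theta>e (Zv y i) = inner (fst \<theta> $ i) y + bias \<theta>e i" for y
          by (simp add: inner_Zv inner_vec_def wgt_def \<theta>e_def bias_def)
        have nz: "fst \<theta> $ i \<noteq> 0 \<or> - bias \<theta>e i \<noteq> 0"
        proof (cases "i \<in> Dg")
          case True then show ?thesis using e0 by (simp add: \<theta>e_def bias_def)
        next
          case False
          then have "bias \<theta> i \<noteq> 0 \<or> (\<exists>j. wgt \<theta> i j \<noteq> 0)" by (auto simp: Dg_def)
          then show ?thesis using False by (auto simp: \<theta>e_def bias_def wgt_def)
        qed
        have "negligible {y. inner (fst \<theta> $ i) y = - bias \<theta>e i}"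
          by (rule negligible_hyperplane[OF nz])
        then have N: "{y. inner (fst \<theta> $ i) y = - bias \<theta>e i} \<in> null_sets lebesgue"
          by (simp add: negligible_iff_null_sets)
        have "AE y in lebesgue. inner \<theta>e (Zv y i) \<noteq> 0"
          by (rule AE_I'[OF N]) (auto simp: zi)
        then have "AE y in lebesgue. y \<in> S \<longrightarrow> inner \<theta>e (Zv y i) \<noteq> 0" by auto
        then show "AE y in lebesgue_on S. inner \<theta>e (Zv y i) \<noteq> 0"
          by (subst AE_restrict_space_iff) (use Sl in auto)
      qed simp
      then show ?thesis by simp
    qed
    have "((\<lambda>\<theta>. integral\<^sup>L (lebesgue_on S) (qf f p relu \<theta>)) has_derivative
           (\<lambda>h. inner h (integral\<^sup>L (lebesgue_on S) (qg f p relu ind \<theta>e)))) (at \<theta>e)"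
    proof (rule integral_qf_deriv[OF Sm Y F P fm pm relum indm])
      show "\<exists>Sb L. 0 \<le> L \<and> (\<forall>x. \<bar>x\<bar> \<le> M \<longrightarrow> \<bar>relu x\<bar> \<le> Sb) \<and>
                   (\<forall>x x'. \<bar>x\<bar> \<le> M \<longrightarrow> \<bar>x'\<bar> \<le> M \<longrightarrow> \<bar>relu x - relu x'\<bar> \<le> L * \<bar>x - x'\<bar>)" for M
        unfolding relu_def by (rule relu_b)
      show "\<exists>Sb'. \<forall>x. \<bar>x\<bar> \<le> M \<longrightarrow> \<bar>ind x\<bar> \<le> Sb'" for M
        unfolding ind_def by (rule ind_b)
      show "AE y in lebesgue_on S. \<forall>i. (relu has_real_derivative ind (inner \<theta>e (Zv y i))) (at (inner \<theta>e (Zv y i)))"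
        using hyp
      proof eventually_elim
        case (elim y)
        show ?case
        proof
          fix i
          show "(relu has_real_derivative ind (inner \<theta>e (Zv y i))) (at (inner \<theta>e (Zv y i)))"
            unfolding relu_def ind_def by (rule relu_deriv) (use elim in blast)
        qed
      qed
    qed
    moreover have "integral\<^sup>L (lebesgue_on S) (qg f p relu ind \<theta>e) = V"
      unfolding V_def qgeq ..
    ultimately show ?thesis
      unfolding risk_eq by (intro deriv_frechet) simp
  qed
  show ?thesis
  proof (rule limiting_I)
    fix e :: real assume e: "e > 0"
    define \<epsilon> where "\<epsilon> = e / (real CARD('h) + 1)"
    have e0: "\<epsilon> > 0" using e by (simp add: \<epsilon>_def)
    define \<theta>e where "\<theta>e = (fst \<theta>, (\<chi> i. if i \<in> Dg then -\<epsilon> else bias \<theta> i), snd (snd \<theta>))"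
    have diff: "\<theta> - \<theta>e = (0, (\<chi> i. if i \<in> Dg then \<epsilon> else 0), 0, 0)"
      by (cases \<theta>) (auto simp: \<theta>e_def vec_eq_iff bias_def Dg_def zero_prod_def)
    have "dist \<theta> \<theta>e = norm (\<chi> i. if i \<in> Dg then \<epsilon> else (0::real) :: real^'h)"
      by (simp add: dist_norm diff norm_Pair)
    also have "\<dots> \<le> (\<Sum>i\<in>(UNIV::'h set). \<bar>(\<chi> i. if i \<in> Dg then \<epsilon> else (0::real) :: real^'h) $ i\<bar>)"
      by (rule norm_le_l1_cart)
    also have "\<dots> \<le> (\<Sum>i\<in>(UNIV::'h set). \<epsilon>)"
      by (rule sum_mono) (use e0 in auto)
    also have "\<dots> < e"
      using e by (simp add: \<epsilon>_def field_simps)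
    finally have "dist \<theta> \<theta>e < e" .
    moreover have "G \<theta> \<in> frechet_subdiff (risk a b f p) \<theta>e"
      using V_frechet[OF e0 \<theta>e_def] G\<theta> by simp
    ultimately show "\<exists>z. dist \<theta> z < e \<and> G \<theta> \<in> frechet_subdiff (risk a b f p) z" by blast
  qed
qed

end
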